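(* Let $\rho$ be a density operator, let $Z_1,\dots,Z_n$ be pairwise commuting Hermitian operators, and consider the family $\varrho_\theta=\exp(i\sum_{j=1}^n\theta_jZ_j)\,\rho\,\exp(-i\sum_{j=1}^n\theta_jZ_j)$, $\theta\in\mathbb{R}^n$, with QFI matrix $F$. Let $S$ be an arbitrary real orthogonal $n\times n$ matrix, let $Z'_j=\sum_{k=1}^nS_{jk}Z_k$, and let $F'$ be the QFI matrix of $\varrho'_\theta=\exp(i\sum_j\theta_jZ'_j)\,\rho\,\exp(-i\sum_j\theta_jZ'_j)$. Then for any real-valued, continuous, strictly monotonic function $f$ on an interval containing the spectrum of $F$, the unweighted $f$-mean QFIs coincide: $\mathcal{M}_f(F')=\mathcal{M}_f(F)$.
   Context: The QFI matrix is the SLD-based one: $[F]_{jk}=\operatorname{Re}\operatorname{tr}(L_jL_k\varrho_\theta)$ with Hermitian $L_j$ satisfying $\partial_j\varrho_\theta=(L_j\varrho_\theta+\varrho_\theta L_j)/2$. The unweighted $f$-mean of a Hermitian matrix $X$ is $\mathcal{M}_f(X):=f^{-1}\big(\tfrac1n\operatorname{tr}f(X)\big)$, with $f(X)$ defined by spectral calculus. *)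

theory Defs
  imports "HOL-Analysis.Analysis"
begin

text \<open>Operators on a finite-dimensional Hilbert space: complex matrices indexed by a
finite type 'd. Parameters theta range over real^'n (n = CARD('n)).\<close>

definition cscale :: "complex \<Rightarrow> complex^'d^'d \<Rightarrow> complex^'d^'d" where
  "cscale c A = (\<chi> i j. c * A$i$j)"

definition adjoint_mat :: "complex^'d^'d \<Rightarrow> complex^'d^'d" where
  "adjoint_mat A = (\<chi> i j. cnj (A$j$i))"

definition hermitian :: "complex^'d^'d \<Rightarrow> bool" where
  "hermitian A \<longleftrightarrow> adjoint_mat A = A"

definition density_operator :: "complex^'d^'d \<Rightarrow> bool" where
  "density_operator \<rho> \<longleftrightarrow> hermitian \<rho>
     \<and> (\<forall>v::complex^'d. 0 \<le> Re (\<Sum>i\<in>UNIV. cnj (v$i) * (\<rho> *v v)$i))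
     \<and> trace \<rho> = 1"

definition mat_pow :: "'a::semiring_1^'d^'d \<Rightarrow> nat \<Rightarrow> 'a^'d^'d" where
  "mat_pow A k = ((\<lambda>B. A ** B) ^^ k) (mat 1)"

definition mexp :: "complex^'d^'d \<Rightarrow> complex^'d^'d" where
  "mexp A = (\<Sum>k. (1 / fact k :: real) *\<^sub>R mat_pow A k)"

definition unitary_family ::
  "('n::finite \<Rightarrow> complex^'d^'d) \<Rightarrow> complex^'d^'d \<Rightarrow> real^'n \<Rightarrow> complex^'d^'d" where
  "unitary_family Z \<rho> \<theta> =
     (let H = (\<Sum>j\<in>UNIV. \<theta>$j *\<^sub>R Z j)
      in mexp (cscale \<i> H) ** \<rho> ** mexp (cscale (-\<i>) H))"

definition is_SLD ::
  "(real^'n::finite \<Rightarrow> complex^'d^'d) \<Rightarrow> real^'n \<Rightarrow> ('n \<Rightarrow> complex^'d^'d) \<Rightarrow> bool" where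
  "is_SLD \<rho> \<theta> L \<longleftrightarrow> (\<forall>j. hermitian (L j) \<and>
     ((\<lambda>t. \<rho> (\<theta> + t *\<^sub>R axis j 1)) has_vector_derivative
        ((1/2) *\<^sub>R (L j ** \<rho> \<theta> + \<rho> \<theta> ** L j))) (at 0))"

definition qfi_matrix ::
  "(real^'n::finite \<Rightarrow> complex^'d^'d) \<Rightarrow> real^'n \<Rightarrow> real^'n^'n" where
  "qfi_matrix \<rho> \<theta> = (let L = (SOME L. is_SLD \<rho> \<theta> L)
     in (\<chi> j k. Re (trace (L j ** L k ** \<rho> \<theta>))))"

definition diag_mat :: "real^'n \<Rightarrow> real^'n^'n" where
  "diag_mat v = (\<chi> i j. if i = j then v$i else 0)"

definition real_spectrum :: "real^'n^'n \<Rightarrow> real set" where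
  "real_spectrum X = {c.  \<exists>v. v \<noteq> 0 \<and> X *v v = c *\<^sub>R v}"

definition mat_fun :: "(real \<Rightarrow> real) \<Rightarrow> real^'n^'n \<Rightarrow> real^'n^'n" where
  "mat_fun f X = (SOME Y. \<exists>Q lam. orthogonal_matrix Q \<and>
       X = Q ** diag_mat lam ** transpose Q \<and>
       Y = Q ** diag_mat (\<chi> i. f (lam$i)) ** transpose Q)"

definition f_mean :: "real set \<Rightarrow> (real \<Rightarrow> real) \<Rightarrow> real^'n^'n \<Rightarrow> real" where
  "f_mean I f X = the_inv_into I f (trace (mat_fun f X) / real CARD('n))"

end

theory Submission
  imports Defs
begin

typedef ('d::finite) cm = "UNIV :: (complex^'d^'d) set" morphisms cmR cmA by auto

declare cmA_inverse[simplified, simp] cmA_inject[simplified, simp] cmR_inverse[simp] cmR_inject[simp]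

definition rn :: "complex^'d^'d \<Rightarrow> real" where
  "rn A = Max (range (\<lambda>i. \<Sum>j\<in>UNIV. cmod (A$i$j)))"

lemma rn_ge: "(\<Sum>j\<in>UNIV. cmod (A$i$j)) \<le> rn A"
  unfolding rn_def by (rule Max_ge) auto

lemma rn_le: "(\<And>i. (\<Sum>j\<in>UNIV. cmod (A$i$j)) \<le> c) \<Longrightarrow> rn A \<le> c"
  unfolding rn_def by (subst Max_le_iff) auto

lemma rn_ex: "\<exists>i. rn A = (\<Sum>j\<in>UNIV. cmod (A$i$j))"
proof -
  have "rn A \<in> range (\<lambda>i. \<Sum>j\<in>UNIV. cmod (A$i$j))"
    unfolding rn_def by (rule Max_in) auto
  then show ?thesis by auto
qed

lemma rn_entry: "cmod (A$i$j) \<le> rn A"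
  by (rule order_trans[OF _ rn_ge[of A i]]) (rule member_le_sum, auto)

lemma rn_nonneg: "0 \<le> rn A"
  by (rule order_trans[OF _ rn_entry]) auto

lemma rn_zero_iff: "rn A = 0 \<longleftrightarrow> A = 0"
proof
  assume "rn A = 0"
  then have "cmod (A$i$j) = 0" for i j using rn_entry[of A i j] by (metis norm_ge_zero order_antisym)
  then show "A = 0" by (simp add: vec_eq_iff)
next
  assume "A = 0" then show "rn A = 0"
    using rn_nonneg[of A] rn_le[of A 0] by auto
qed

lemma rn_triangle: "rn (A + B) \<le> rn A + rn B"
proof (rule rn_le)
  fix i
  have "(\<Sum>j\<in>UNIV. cmod ((A+B)$i$j)) \<le> (\<Sum>j\<in>UNIV. cmod (A$i$j) + cmod (B$i$j))"
    by (rule sum_mono) (simp add: norm_triangle_ineq)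
  also have "\<dots> \<le> rn A + rn B" by (simp add: sum.distrib add_mono rn_ge)
  finally show "(\<Sum>j\<in>UNIV. cmod ((A+B)$i$j)) \<le> rn A + rn B" .
qed

lemma rn_scaleR: "rn (r *\<^sub>R A) = \<bar>r\<bar> * rn A"
proof (rule antisym)
  show "rn (r *\<^sub>R A) \<le> \<bar>r\<bar> * rn A"
    by (rule rn_le) (simp add: sum_distrib_left[symmetric] mult_left_mono rn_ge)
  obtain i where i: "rn A = (\<Sum>j\<in>UNIV. cmod (A$i$j))" using rn_ex by blast
  have "\<bar>r\<bar> * rn A = (\<Sum>j\<in>UNIV. cmod ((r *\<^sub>R A)$i$j))"
    by (simp add: i sum_distrib_left)
  also have "\<dots> \<le> rn (r *\<^sub>R A)" by (rule rn_ge)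
  finally show "\<bar>r\<bar> * rn A \<le> rn (r *\<^sub>R A)" .
qed

lemma rn_mult: "rn (A ** B) \<le> rn A * rn B"
proof (rule rn_le)
  fix i
  have "(\<Sum>j\<in>UNIV. cmod ((A ** B)$i$j)) \<le> (\<Sum>j\<in>UNIV. \<Sum>k\<in>UNIV. cmod (A$i$k) * cmod (B$k$j))"
    unfolding matrix_matrix_mult_def
    by (rule sum_mono) (auto intro!: order_trans[OF norm_sum] sum_mono simp: norm_mult)
  also have "\<dots> = (\<Sum>k\<in>UNIV. cmod (A$i$k) * (\<Sum>j\<in>UNIV. cmod (B$k$j)))"
    by (subst sum.swap) (simp add: sum_distrib_left)
  also have "\<dots> \<le> (\<Sum>k\<in>UNIV. cmod (A$i$k) * rn B)"
    by (rule sum_mono) (simp add: mult_left_mono rn_ge)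
  also have "\<dots> \<le> rn A * rn B"
    by (simp add: sum_distrib_right[symmetric] mult_right_mono rn_ge rn_nonneg)
  finally show "(\<Sum>j\<in>UNIV. cmod ((A ** B)$i$j)) \<le> rn A * rn B" .
qed

lemma rn_one: "rn (mat 1 :: complex^'d^'d) = 1"
proof -
  have r: "(\<Sum>j\<in>UNIV. cmod ((mat 1 :: complex^'d^'d)$i$j)) = 1" for i
    by (simp add: mat_def if_distrib sum.delta cong: if_cong)
  show ?thesis using rn_ex[of "mat 1 :: complex^'d^'d"] r by metis
qed

lemma norm_l1_vec: "norm (x::'a::real_normed_vector^'n) \<le> (\<Sum>i\<in>UNIV. norm (x$i))"
  by (simp add: norm_vec_def L2_set_le_sum)

lemma matrix_add_rdistrib: "((B + C) ** A) = (B ** A) + (C ** A)"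
  by (vector matrix_matrix_mult_def sum.distrib[symmetric] field_simps)

lemma mm_scaleR_left: "((a::real) *\<^sub>R (A::complex^'n^'m)) ** B = a *\<^sub>R (A ** B)"
  by (simp add: vec_eq_iff matrix_matrix_mult_def scaleR_sum_right)

lemma mm_scaleR_right: "(A::complex^'n^'m) ** ((a::real) *\<^sub>R B) = a *\<^sub>R (A ** B)"
  by (simp add: vec_eq_iff matrix_matrix_mult_def scaleR_sum_right)

lemma norm_le_rn: "norm (A :: complex^'d^'d) \<le> real CARD('d) * rn A"
proof -
  have "norm A \<le> (\<Sum>i\<in>UNIV. norm (A$i))" by (rule norm_l1_vec)
  also have "\<dots> \<le> (\<Sum>i\<in>UNIV. \<Sum>j\<in>UNIV. norm (A$i$j))"
    by (rule sum_mono) (rule norm_l1_vec)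
  also have "\<dots> \<le> (\<Sum>i\<in>(UNIV::'d set). rn A)"
    by (rule sum_mono) (rule rn_ge)
  finally show ?thesis by simp
qed

lemma rn_le_norm: "rn (A :: complex^'d^'d) \<le> real CARD('d) * norm A"
proof -
  obtain i where i: "rn A = (\<Sum>j\<in>UNIV. cmod (A$i$j))" using rn_ex by blast
  also have "\<dots> \<le> (\<Sum>j\<in>(UNIV::'d set). norm A)"
    by (rule sum_mono) (metis Finite_Cartesian_Product.norm_nth_le order_trans)
  finally show ?thesis by simp
qed

instantiation cm :: (finite) real_normed_algebra_1
begin
definition "0 = cmA 0"
definition "1 = cmA (mat 1)"
definition "x + y = cmA (cmR x + cmR y)"
definition "x - y = cmA (cmR x - cmR y)"
definition "- x = cmA (- cmR x)"
definition "x * y = cmA (cmR x ** cmR y)"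
definition "scaleR r x = cmA (r *\<^sub>R cmR x)"
definition "norm x = rn (cmR x)"
definition dist_cm :: "'a cm \<Rightarrow> 'a cm \<Rightarrow> real" where "dist_cm x y = norm (x - y)"
definition sgn_cm :: "'a cm \<Rightarrow> 'a cm" where "sgn_cm x = scaleR (inverse (norm x)) x"
definition uniformity_cm :: "('a cm \<times> 'a cm) filter" where
  "uniformity_cm = (INF e\<in>{0 <..}. principal {(x, y). dist x y < e})"
definition open_cm :: "'a cm set \<Rightarrow> bool" where
  "open_cm S = (\<forall>x\<in>S. \<forall>\<^sub>F (x', y) in uniformity. x' = x \<longrightarrow> y \<in> S)"
instance
proof
  fix a b :: real and x y z :: "'a cm"
  show "x + y + z = x + (y + z)" by (simp add: plus_cm_def add.assoc)
  show "x + y = y + x" by (simp add: plus_cm_def add.commute)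
  show "0 + x = x" by (simp add: plus_cm_def zero_cm_def)
  show "- x + x = 0" by (simp add: plus_cm_def zero_cm_def uminus_cm_def)
  show "x - y = x + - y" by (simp add: plus_cm_def minus_cm_def uminus_cm_def)
  show "a *\<^sub>R (x + y) = a *\<^sub>R x + a *\<^sub>R y" by (simp add: plus_cm_def scaleR_cm_def scaleR_right_distrib)
  show "(a + b) *\<^sub>R x = a *\<^sub>R x + b *\<^sub>R x" by (simp add: plus_cm_def scaleR_cm_def scaleR_left_distrib)
  show "a *\<^sub>R b *\<^sub>R x = (a * b) *\<^sub>R x" by (simp add: scaleR_cm_def)
  show "1 *\<^sub>R x = x" by (simp add: scaleR_cm_def)
  show "x * y * z = x * (y * z)" by (simp add: times_cm_def matrix_mul_assoc)
  show "(x + y) * z = x * z + y * z" by (simp add: times_cm_def plus_cm_def matrix_add_rdistrib)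
  show "x * (y + z) = x * y + x * z" by (simp add: times_cm_def plus_cm_def matrix_add_ldistrib)
  show "a *\<^sub>R x * y = a *\<^sub>R (x * y)"
    by (simp add: times_cm_def scaleR_cm_def mm_scaleR_left)
  show "x * a *\<^sub>R y = a *\<^sub>R (x * y)"
    by (simp add: times_cm_def scaleR_cm_def mm_scaleR_right)
  show "1 * x = x" by (simp add: times_cm_def one_cm_def)
  show "x * 1 = x" by (simp add: times_cm_def one_cm_def)
  show "(0::'a cm) \<noteq> 1"
    by (simp add: zero_cm_def one_cm_def vec_eq_iff mat_def)
  show "dist x y = norm (x - y)" by (simp add: dist_cm_def)
  show "sgn x = inverse (norm x) *\<^sub>R x" by (simp add: sgn_cm_def)
  show "(uniformity :: ('a cm \<times> 'a cm) filter) = (INF e\<in>{0 <..}. principal {(x, y). dist x y < e})"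
    by (simp add: uniformity_cm_def)
  show "open U = (\<forall>x\<in>U. \<forall>\<^sub>F (x', y) in uniformity. x' = x \<longrightarrow> y \<in> U)" for U :: "'a cm set"
    by (simp add: open_cm_def)
  show "(norm x = 0) = (x = 0)" by (simp add: norm_cm_def zero_cm_def rn_zero_iff) (metis cmR_inverse cmA_inverse UNIV_I)
  show "norm (x + y) \<le> norm x + norm y" by (simp add: norm_cm_def plus_cm_def rn_triangle)
  show "norm (a *\<^sub>R x) = \<bar>a\<bar> * norm x" by (simp add: norm_cm_def scaleR_cm_def rn_scaleR)
  show "norm (x * y) \<le> norm x * norm y" by (simp add: norm_cm_def times_cm_def rn_mult)
  show "norm (1::'a cm) = 1" by (simp add: norm_cm_def one_cm_def rn_one)
qed
end

lemma cmR_zero[simp]: "cmR 0 = 0" by (simp add: zero_cm_def)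
lemma cmR_one[simp]: "cmR 1 = mat 1" by (simp add: one_cm_def)
lemma cmR_add[simp]: "cmR (x + y) = cmR x + cmR y" by (simp add: plus_cm_def)
lemma cmR_diff[simp]: "cmR (x - y) = cmR x - cmR y" by (simp add: minus_cm_def)
lemma cmR_uminus[simp]: "cmR (- x) = - cmR x" by (simp add: uminus_cm_def)
lemma cmR_mult[simp]: "cmR (x * y) = cmR x ** cmR y" by (simp add: times_cm_def)
lemma cmR_scaleR[simp]: "cmR (r *\<^sub>R x) = r *\<^sub>R cmR x" by (simp add: scaleR_cm_def)
lemma norm_cm: "norm x = rn (cmR x)" by (simp add: norm_cm_def)

lemma cmA_add: "cmA (A + B) = cmA A + cmA B" by (simp add: plus_cm_def)
lemma cmA_mult: "cmA (A ** B) = cmA A * cmA B" by (simp add: times_cm_def)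
lemma cmA_scaleR: "cmA (r *\<^sub>R A) = r *\<^sub>R cmA A" by (simp add: scaleR_cm_def)
lemma cmA_zero: "cmA 0 = 0" by (simp add: zero_cm_def)

lemma mat_pow_Suc: "mat_pow A (Suc n) = A ** mat_pow A n"
  by (simp add: mat_pow_def)
lemma mat_pow_0: "mat_pow A 0 = mat 1"
  by (simp add: mat_pow_def)

lemma cmR_power: "cmR (x ^ n) = mat_pow (cmR x) n"
  by (induction n) (auto simp: mat_pow_Suc mat_pow_0)

lemma mat_pow_cm: "mat_pow A n = cmR (cmA A ^ n)"
  by (simp add: cmR_power)

lemma bl_cmR: "bounded_linear (cmR :: 'd::finite cm \<Rightarrow> _)"
proof (rule bounded_linear_intro[where K="real CARD('d)"])
  fix x y :: "'d cm" and r :: real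
  show "cmR (x + y) = cmR x + cmR y" by simp
  show "cmR (r *\<^sub>R x) = r *\<^sub>R cmR x" by simp
  show "norm (cmR x) \<le> norm x * real CARD('d)"
    using norm_le_rn[of "cmR x"] by (simp add: norm_cm mult.commute)
qed

lemma bl_cmA: "bounded_linear (cmA :: _ \<Rightarrow> 'd::finite cm)"
proof (rule bounded_linear_intro[where K="real CARD('d)"])
  fix x y :: "complex^'d^'d" and r :: real
  show "cmA (x + y) = cmA x + cmA y" by (simp add: cmA_add)
  show "cmA (r *\<^sub>R x) = r *\<^sub>R cmA x" by (simp add: cmA_scaleR)
  show "norm (cmA x :: 'd cm) \<le> norm x * real CARD('d)"
    using rn_le_norm[of x] by (simp add: norm_cm mult.commute)
qed

instance cm :: (finite) banach
proof
  fix X :: "nat \<Rightarrow> 'a cm" assume "Cauchy X"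
  then have "Cauchy (\<lambda>n. cmR (X n))" by (rule bounded_linear.Cauchy[OF bl_cmR])
  then obtain L where "(\<lambda>n. cmR (X n)) \<longlonglongrightarrow> L" using Cauchy_convergent_iff convergent_def by blast
  then have "(\<lambda>n. cmA (cmR (X n))) \<longlonglongrightarrow> (cmA L :: 'a cm)" by (rule bounded_linear.tendsto[OF bl_cmA])
  then show "convergent X" by (auto simp: convergent_def)
qed

lemma mexp_cm: "mexp A = cmR (exp (cmA A))"
proof -
  have "(\<lambda>n. cmR ((cmA A)^n /\<^sub>R fact n)) sums cmR (exp (cmA A))"
    by (rule bounded_linear.sums[OF bl_cmR exp_converges])
  then have "(\<lambda>n. (1 / fact n :: real) *\<^sub>R mat_pow A n) sums cmR (exp (cmA A))"
    by (simp add: cmR_power divide_inverse_commute)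
  then show ?thesis unfolding mexp_def by (simp add: sums_iff)
qed

lemma mexp_sums: "(\<lambda>n. (1 / fact n :: real) *\<^sub>R mat_pow A n) sums mexp A"
proof -
  have "(\<lambda>n. cmR ((cmA A)^n /\<^sub>R fact n)) sums cmR (exp (cmA A))"
    by (rule bounded_linear.sums[OF bl_cmR exp_converges])
  then show ?thesis
    by (simp add: cmR_power divide_inverse_commute mexp_cm)
qed

lemma mexp_add: "A ** B = B ** A \<Longrightarrow> mexp (A + B) = mexp A ** mexp B"
proof -
  assume c: "A ** B = B ** A"
  have "cmA A * cmA B = cmA B * cmA A" using c by (metis cmA_mult)
  then show ?thesis by (simp add: mexp_cm cmA_add exp_add_commuting)
qed

lemma mexp_zero: "mexp 0 = mat 1"
  by (simp add: mexp_cm cmA_zero)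

lemma exp_commute: fixes x y :: "'a::{real_normed_algebra_1,banach}"
  assumes "y * x = x * y" shows "y * exp x = exp x * y"
proof -
  have "y * exp x = (\<Sum>n. y * (x^n /\<^sub>R fact n))"
    unfolding exp_def by (rule suminf_mult[symmetric, OF summable_exp_generic])
  also have "\<dots> = (\<Sum>n. (x^n /\<^sub>R fact n) * y)"
    using power_commuting_commutes[OF assms[symmetric]] by (simp add: power_commuting_commutes)
  also have "\<dots> = exp x * y"
    unfolding exp_def by (rule suminf_mult2[symmetric, OF summable_exp_generic])
  finally show ?thesis .
qed

lemma mexp_commute: "A ** B = B ** A \<Longrightarrow> B ** mexp A = mexp A ** B"
proof -
  assume c: "A ** B = B ** A"
  have "cmA B * cmA A = cmA A * cmA B" using c by (metis cmA_mult)
  then have "cmA B * exp (cmA A) = exp (cmA A) * cmA B" by (rule exp_commute)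
  then have "cmR (cmA B * exp (cmA A)) = cmR (exp (cmA A) * cmA B)" by simp
  then show ?thesis by (simp add: mexp_cm)
qed

lemma mexp_deriv: "((\<lambda>t. mexp (t *\<^sub>R A)) has_vector_derivative A) (at 0)"
proof -
  have "((\<lambda>t. exp (t *\<^sub>R cmA A)) has_vector_derivative exp (0 *\<^sub>R cmA A) * cmA A) (at 0)"
    by (rule exp_scaleR_has_vector_derivative_right)
  then have "((\<lambda>t. cmR (exp (t *\<^sub>R cmA A))) has_vector_derivative cmR (exp (0 *\<^sub>R cmA A) * cmA A)) (at 0)"
    by (rule bounded_linear.has_vector_derivative[OF bl_cmR])
  then show ?thesis by (simp add: mexp_cm cmA_scaleR)
qed

type_synonym 'd cmat = "complex^'d^'d"

lemma adj_adj[simp]: "adjoint_mat (adjoint_mat A) = A"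
  by (simp add: adjoint_mat_def vec_eq_iff)
lemma adj_add[simp]: "adjoint_mat (A + B) = adjoint_mat A + adjoint_mat B"
  by (simp add: adjoint_mat_def vec_eq_iff)
lemma adj_diff[simp]: "adjoint_mat (A - B) = adjoint_mat A - adjoint_mat B"
  by (simp add: adjoint_mat_def vec_eq_iff)
lemma adj_uminus[simp]: "adjoint_mat (- A) = - adjoint_mat A"
  by (simp add: adjoint_mat_def vec_eq_iff)
lemma adj_zero[simp]: "adjoint_mat 0 = 0"
  by (simp add: adjoint_mat_def vec_eq_iff)
lemma adj_scaleR[simp]: "adjoint_mat (r *\<^sub>R A) = r *\<^sub>R adjoint_mat A"
  by (simp add: adjoint_mat_def vec_eq_iff)
lemma adj_mat1[simp]: "adjoint_mat (mat 1) = mat 1"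
  by (simp add: adjoint_mat_def vec_eq_iff mat_def)
lemma adj_mult: "adjoint_mat (A ** B) = adjoint_mat B ** adjoint_mat A"
  by (simp add: adjoint_mat_def vec_eq_iff matrix_matrix_mult_def mult.commute)
lemma adj_cscale[simp]: "adjoint_mat (cscale c A) = cscale (cnj c) (adjoint_mat A)"
  by (simp add: adjoint_mat_def cscale_def vec_eq_iff)
lemma adj_sum: "adjoint_mat (\<Sum>k\<in>K. f k) = (\<Sum>k\<in>K. adjoint_mat (f k))"
  by (induction K rule: infinite_finite_induct) auto
lemma adj_eq_iff: "adjoint_mat A = adjoint_mat B \<longleftrightarrow> A = B"
  by (metis adj_adj)

lemma cscale_mult_left[simp]: "cscale c A ** B = cscale c (A ** B)"
  by (simp add: cscale_def vec_eq_iff matrix_matrix_mult_def sum_distrib_left mult.assoc)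
lemma cscale_mult_right[simp]: "A ** cscale c B = cscale c (A ** B)"
  by (simp add: cscale_def vec_eq_iff matrix_matrix_mult_def sum_distrib_left mult.left_commute)
lemma cscale_add: "cscale c (A + B) = cscale c A + cscale c B"
  by (simp add: cscale_def vec_eq_iff algebra_simps)
lemma cscale_diff: "cscale c (A - B) = cscale c A - cscale c B"
  by (simp add: cscale_def vec_eq_iff algebra_simps)
lemma cscale_add_left: "cscale (c + d) A = cscale c A + cscale d A"
  by (simp add: cscale_def vec_eq_iff algebra_simps)
lemma cscale_cscale[simp]: "cscale c (cscale d A) = cscale (c * d) A"
  by (simp add: cscale_def vec_eq_iff)
lemma cscale_one[simp]: "cscale 1 A = A"
  by (simp add: cscale_def vec_eq_iff)
lemma cscale_zero[simp]: "cscale c 0 = 0"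
  by (simp add: cscale_def vec_eq_iff)
lemma cscale_zero_left[simp]: "cscale 0 A = 0"
  by (simp add: cscale_def vec_eq_iff)
lemma cscale_scaleR: "cscale c (r *\<^sub>R A) = r *\<^sub>R cscale c A"
  by (simp add: cscale_def vec_eq_iff scaleR_conv_of_real)
lemma scaleR_cscale: "r *\<^sub>R A = cscale (complex_of_real r) A"
  by (simp add: cscale_def vec_eq_iff) (simp add: scaleR_conv_of_real)
lemma cscale_sum: "cscale c (\<Sum>k\<in>K. f k) = (\<Sum>k\<in>K. cscale c (f k))"
  by (induction K rule: infinite_finite_induct) (auto simp: cscale_add)
lemma cscale_minus1: "cscale (-1) A = - A"
  by (simp add: cscale_def vec_eq_iff)
lemma cscale_uminus_left: "cscale (- c) A = - cscale c A"
  by (simp add: cscale_def vec_eq_iff)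

lemma mm_sum_left: "(\<Sum>k\<in>K. f k) ** B = (\<Sum>k\<in>K. f k ** B)"
  by (induction K rule: infinite_finite_induct) (auto simp: matrix_add_rdistrib)
lemma mm_sum_right: "B ** (\<Sum>k\<in>K. f k) = (\<Sum>k\<in>K. B ** f k)"
  by (induction K rule: infinite_finite_induct) (auto simp: matrix_add_ldistrib)
lemma mm_diff_left: "(A - B) ** (C::'a::ring_1^'n^'n) = A ** C - B ** C"
  by (vector matrix_matrix_mult_def sum_subtractf[symmetric] field_simps)
lemma mm_diff_right: "(C::'a::ring_1^'n^'n) ** (A - B) = C ** A - C ** B"
  by (vector matrix_matrix_mult_def sum_subtractf[symmetric] field_simps)
lemma mm_uminus_left: "(- A) ** (C::'a::ring_1^'n^'n) = - (A ** C)"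
  by (vector matrix_matrix_mult_def sum_negf[symmetric])
lemma mm_uminus_right: "(C::'a::ring_1^'n^'n) ** (- A) = - (C ** A)"
  by (vector matrix_matrix_mult_def sum_negf[symmetric])

lemma trace_add: "trace (A + B) = trace A + trace B"
  by (simp add: trace_def sum.distrib)
lemma trace_diff: "trace ((A::'a::ring_1^'n^'n) - B) = trace A - trace B"
  by (simp add: trace_def sum_subtractf)
lemma trace_cscale: "trace (cscale c A) = c * trace A"
  by (simp add: trace_def cscale_def sum_distrib_left)
lemma trace_scaleR: "trace (r *\<^sub>R (A::'d::finite cmat)) = complex_of_real r * trace A"
  by (simp add: trace_def sum_distrib_left) (simp add: scaleR_conv_of_real)
lemma trace_adj: "trace (adjoint_mat A) = cnj (trace A)"
  by (simp add: trace_def adjoint_mat_def)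
lemma trace_zero[simp]: "trace 0 = 0"
  by (simp add: trace_def)
lemma trace_sum: "trace (\<Sum>k\<in>K. f k) = (\<Sum>k\<in>K. trace (f k))"
  by (induction K rule: infinite_finite_induct) (auto simp: trace_add)

lemma mat_pow_commute: "(A::'d::finite cmat) ** mat_pow A n = mat_pow A n ** A"
proof -
  have "cmA A * cmA A ^ n = cmA A ^ n * cmA A" by (simp add: power_commutes)
  then have "cmR (cmA A * cmA A ^ n) = cmR (cmA A ^ n * cmA A)" by simp
  then show ?thesis by (simp add: mat_pow_cm)
qed

lemma adj_mat_pow: "adjoint_mat (mat_pow A n) = mat_pow (adjoint_mat A) n"
  by (induction n) (auto simp: mat_pow_Suc mat_pow_0 adj_mult mat_pow_commute)

lemma linear_adj: "linear (adjoint_mat :: 'd::finite cmat \<Rightarrow> 'd cmat)"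
  by (rule linearI) auto

lemma bl_adj: "bounded_linear (adjoint_mat :: 'd::finite cmat \<Rightarrow> 'd cmat)"
  using linear_adj linear_conv_bounded_linear by blast

lemma mexp_adj: "adjoint_mat (mexp A) = mexp (adjoint_mat A)"
proof -
  have "(\<lambda>n. adjoint_mat ((1 / fact n :: real) *\<^sub>R mat_pow A n)) sums adjoint_mat (mexp A)"
    by (rule bounded_linear.sums[OF bl_adj mexp_sums])
  then have "(\<lambda>n. (1 / fact n :: real) *\<^sub>R mat_pow (adjoint_mat A) n) sums adjoint_mat (mexp A)"
    by (simp add: adj_mat_pow)
  then show ?thesis using mexp_sums sums_unique2 by blast
qed

lemma inner_cmat: "inner (A::'d::finite cmat) B = Re (trace (adjoint_mat A ** B))"
proof -
  have "inner A B = (\<Sum>i\<in>UNIV. \<Sum>j\<in>UNIV. Re (cnj (A$i$j) * B$i$j))"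
    by (simp add: inner_vec_def inner_complex_def)
  also have "\<dots> = (\<Sum>j\<in>UNIV. \<Sum>i\<in>UNIV. Re (cnj (A$i$j) * B$i$j))"
    by (rule sum.swap)
  also have "\<dots> = Re (trace (adjoint_mat A ** B))"
    by (simp add: trace_def adjoint_mat_def matrix_matrix_mult_def)
  finally show ?thesis .
qed

definition Hs :: "('n::finite \<Rightarrow> 'd::finite cmat) \<Rightarrow> real^'n \<Rightarrow> 'd cmat" where
  "Hs Z \<theta> = (\<Sum>j\<in>UNIV. \<theta>$j *\<^sub>R Z j)"

lemma fam_def: "unitary_family Z \<rho> \<theta> = mexp (cscale \<i> (Hs Z \<theta>)) ** \<rho> ** mexp (cscale (-\<i>) (Hs Z \<theta>))"
  by (simp add: unitary_family_def Hs_def Let_def)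

definition SLDrel :: "'d::finite cmat \<Rightarrow> ('n \<Rightarrow> 'd cmat) \<Rightarrow> ('n \<Rightarrow> 'd cmat) \<Rightarrow> bool" where
  "SLDrel \<sigma> W L \<longleftrightarrow> (\<forall>j. hermitian (L j) \<and>
     (1/2) *\<^sub>R (L j ** \<sigma> + \<sigma> ** L j) = cscale \<i> (W j ** \<sigma> - \<sigma> ** W j))"

lemma Hs_axis: "Hs Z (\<theta> + t *\<^sub>R axis j 1) = Hs Z \<theta> + t *\<^sub>R Z j"
proof -
  have "Hs Z (\<theta> + t *\<^sub>R axis j 1) = (\<Sum>k\<in>UNIV. \<theta>$k *\<^sub>R Z k + (if k = j then t *\<^sub>R Z k else 0))"
    unfolding Hs_def by (rule sum.cong) (auto simp: axis_def scaleR_add_left)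
  also have "\<dots> = Hs Z \<theta> + t *\<^sub>R Z j"
    by (simp add: sum.distrib Hs_def)
  finally show ?thesis .
qed

lemma Hs_commute:
  assumes "\<forall>j k. Z j ** Z k = Z k ** Z j"
  shows "Hs Z \<theta> ** Z j = Z j ** Hs Z \<theta>"
  unfolding Hs_def mm_sum_left mm_sum_right
  using assms by (simp add: mm_scaleR_left mm_scaleR_right)

lemma cm_path_deriv:
  fixes U R V \<alpha> \<beta> :: "'d::finite cm"
  shows "((\<lambda>t. U * (exp (t *\<^sub>R \<alpha>) * R * exp (t *\<^sub>R \<beta>)) * V) has_vector_derivative
          U * (R * \<beta> + \<alpha> * R) * V) (at 0)"
proof -
  have ea: "((\<lambda>t. exp (t *\<^sub>R \<alpha>)) has_vector_derivative \<alpha>) (at 0)"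
    using exp_scaleR_has_vector_derivative_right[of \<alpha> 0 UNIV] by simp
  have eb: "((\<lambda>t. exp (t *\<^sub>R \<beta>)) has_vector_derivative \<beta>) (at 0)"
    using exp_scaleR_has_vector_derivative_right[of \<beta> 0 UNIV] by simp
  have f: "((\<lambda>t. exp (t *\<^sub>R \<alpha>) * R) has_vector_derivative \<alpha> * R) (at 0)"
    by (rule has_vector_derivative_mult_left[OF ea])
  have q: "((\<lambda>t. exp (t *\<^sub>R \<alpha>) * R * exp (t *\<^sub>R \<beta>)) has_vector_derivative
      (exp (0 *\<^sub>R \<alpha>) * R * \<beta> + \<alpha> * R * exp (0 *\<^sub>R \<beta>))) (at 0)"
    by (rule has_vector_derivative_mult[OF f eb])
  have q': "((\<lambda>t. exp (t *\<^sub>R \<alpha>) * R * exp (t *\<^sub>R \<beta>)) has_vector_derivative (R * \<beta> + \<alpha> * R)) (at 0)"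
    using q by simp
  show ?thesis
    by (rule has_vector_derivative_mult_left[OF has_vector_derivative_mult_right[OF q']])
qed

lemma fam_deriv:
  assumes comm: "\<forall>j k. Z j ** Z k = Z k ** Z j"
  shows "((\<lambda>t. unitary_family Z \<rho> (\<theta> + t *\<^sub>R axis j 1)) has_vector_derivative
          cscale \<i> (Z j ** unitary_family Z \<rho> \<theta> - unitary_family Z \<rho> \<theta> ** Z j)) (at 0)"
proof -
  define H where "H = Hs Z \<theta>"
  define a where "a = cscale \<i> (Z j)"
  define b where "b = cscale (-\<i>) (Z j)"
  define U where "U = mexp (cscale \<i> H)"
  define V where "V = mexp (cscale (-\<i>) H)"
  have HZ: "H ** Z j = Z j ** H" unfolding H_def by (rule Hs_commute[OF comm])
  have c1: "cscale \<i> H ** (t *\<^sub>R a) = (t *\<^sub>R a) ** cscale \<i> H" for t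
    by (simp add: a_def mm_scaleR_left mm_scaleR_right HZ cscale_scaleR)
  have c2: "(t *\<^sub>R b) ** cscale (-\<i>) H = cscale (-\<i>) H ** (t *\<^sub>R b)" for t
    by (simp add: b_def mm_scaleR_left mm_scaleR_right HZ cscale_scaleR)
  have e1: "mexp (cscale \<i> (Hs Z (\<theta> + t *\<^sub>R axis j 1))) = U ** mexp (t *\<^sub>R a)" for t
  proof -
    have "cscale \<i> (Hs Z (\<theta> + t *\<^sub>R axis j 1)) = cscale \<i> H + t *\<^sub>R a"
      by (simp add: Hs_axis a_def H_def[symmetric] cscale_add cscale_scaleR)
    then show ?thesis by (simp add: U_def mexp_add[OF c1])
  qed
  have e2: "mexp (cscale (-\<i>) (Hs Z (\<theta> + t *\<^sub>R axis j 1))) = mexp (t *\<^sub>R b) ** V" for t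
  proof -
    have "cscale (-\<i>) (Hs Z (\<theta> + t *\<^sub>R axis j 1)) = t *\<^sub>R b + cscale (-\<i>) H"
      by (simp add: Hs_axis b_def H_def[symmetric] cscale_add cscale_scaleR add.commute)
    then show ?thesis by (simp add: V_def mexp_add[OF c2])
  qed
  have path: "unitary_family Z \<rho> (\<theta> + t *\<^sub>R axis j 1) =
     cmR (cmA U * (exp (t *\<^sub>R cmA a) * cmA \<rho> * exp (t *\<^sub>R cmA b)) * cmA V)" for t
    unfolding fam_def e1 e2 by (simp add: mexp_cm cmA_scaleR matrix_mul_assoc)
  have d: "((\<lambda>t. unitary_family Z \<rho> (\<theta> + t *\<^sub>R axis j 1)) has_vector_derivative
      cmR (cmA U * (cmA \<rho> * cmA b + cmA a * cmA \<rho>) * cmA V)) (at 0)"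
    unfolding path by (rule bounded_linear.has_vector_derivative[OF bl_cmR cm_path_deriv])
  have ZU: "Z j ** U = U ** Z j"
    unfolding U_def by (rule mexp_commute) (simp add: HZ)
  have ZV: "Z j ** V = V ** Z j"
    unfolding V_def by (rule mexp_commute) (simp add: HZ)
  have fam: "unitary_family Z \<rho> \<theta> = U ** \<rho> ** V"
    by (simp add: fam_def U_def V_def H_def)
  have "cmR (cmA U * (cmA \<rho> * cmA b + cmA a * cmA \<rho>) * cmA V)
        = U ** (\<rho> ** b + a ** \<rho>) ** V" by simp
  also have "\<dots> = cscale (-\<i>) (U ** \<rho> ** (Z j ** V)) + cscale \<i> ((U ** Z j) ** \<rho> ** V)"
    by (simp add: a_def b_def matrix_add_ldistrib matrix_add_rdistrib matrix_mul_assoc)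
  also have "\<dots> = cscale \<i> (Z j ** unitary_family Z \<rho> \<theta> - unitary_family Z \<rho> \<theta> ** Z j)"
    unfolding fam ZV ZU[symmetric]
    by (simp add: cscale_diff cscale_uminus_left matrix_mul_assoc)
  finally show ?thesis using d by simp
qed

lemma is_SLD_fam:
  assumes comm: "\<forall>j k. Z j ** Z k = Z k ** Z j"
  shows "is_SLD (unitary_family Z \<rho>) \<theta> L \<longleftrightarrow> SLDrel (unitary_family Z \<rho> \<theta>) Z L"
  unfolding is_SLD_def SLDrel_def
  using fam_deriv[OF comm] vector_derivative_unique_at by metis

lemma quad_zero: fixes c d :: real assumes "\<forall>t::real. 0 \<le> 2*t*c + t^2*d" shows "c = 0"
proof (rule ccontr)
  assume c: "c \<noteq> 0"
  define K where "K = \<bar>d\<bar> + 1"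
  have K: "K > 0" "\<bar>d\<bar> \<le> K" by (auto simp: K_def)
  define t where "t = - c / K"
  have "0 \<le> 2*t*c + t^2*d" using assms by blast
  also have "2*t*c + t^2*d = (c^2 / K^2) * (d - 2*K)"
    using K by (simp add: t_def field_simps power2_eq_square)
  also have "\<dots> < 0"
    using K c by (intro mult_pos_neg) (auto simp: abs_le_iff)
  finally show False by simp
qed

definition Bf :: "'d::finite cmat \<Rightarrow> complex^'d \<Rightarrow> complex^'d \<Rightarrow> complex" where
  "Bf \<sigma> x y = (\<Sum>i\<in>UNIV. cnj (x$i) * (\<sigma> *v y)$i)"

definition psd :: "'d::finite cmat \<Rightarrow> bool" where
  "psd \<sigma> \<longleftrightarrow> (\<forall>v. 0 \<le> Re (Bf \<sigma> v v))"

lemma Bf_expand: "Bf \<sigma> x y = (\<Sum>i\<in>UNIV. \<Sum>k\<in>UNIV. cnj (x$i) * \<sigma>$i$k * y$k)"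
  by (simp add: Bf_def matrix_vector_mult_def sum_distrib_left mult.assoc)

lemma Bf_add_left: "Bf \<sigma> (x + y) z = Bf \<sigma> x z + Bf \<sigma> y z"
  by (simp add: Bf_expand distrib_left distrib_right sum.distrib)
lemma Bf_add_right: "Bf \<sigma> z (x + y) = Bf \<sigma> z x + Bf \<sigma> z y"
  by (simp add: Bf_expand distrib_left distrib_right sum.distrib)
lemma Bf_scale_left: "Bf \<sigma> (t *\<^sub>R x) z = of_real t * Bf \<sigma> x z"
  by (simp add: Bf_expand) (simp add: scaleR_conv_of_real sum_distrib_left mult_ac)
lemma Bf_scale_right: "Bf \<sigma> z (t *\<^sub>R x) = of_real t * Bf \<sigma> z x"
  by (simp add: Bf_expand) (simp add: scaleR_conv_of_real sum_distrib_left mult_ac)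

lemma Bf_herm: assumes "hermitian \<sigma>" shows "Bf \<sigma> y x = cnj (Bf \<sigma> x y)"
proof -
  have h: "cnj (\<sigma>$k$i) = \<sigma>$i$k" for i k
    using assms unfolding hermitian_def adjoint_mat_def by (metis vec_lambda_beta)
  have "cnj (Bf \<sigma> x y) = (\<Sum>i\<in>UNIV. \<Sum>k\<in>UNIV. x$i * \<sigma>$k$i * cnj (y$k))"
    by (simp add: Bf_expand h)
  also have "\<dots> = (\<Sum>k\<in>UNIV. \<Sum>i\<in>UNIV. x$i * \<sigma>$k$i * cnj (y$k))"
    by (rule sum.swap)
  also have "\<dots> = Bf \<sigma> y x"
    by (simp add: Bf_expand mult_ac)
  finally show ?thesis by simp
qed


lemma psd_null:
  assumes h: "hermitian \<sigma>" and p: "psd \<sigma>" and z: "Re (Bf \<sigma> v v) = 0"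
  shows "\<sigma> *v v = 0"
proof -
  define w where "w = \<sigma> *v v"
  have "0 \<le> 2*t*Re (Bf \<sigma> w v) + t^2 * Re (Bf \<sigma> w w)" for t :: real
  proof -
    have "0 \<le> Re (Bf \<sigma> (v + t *\<^sub>R w) (v + t *\<^sub>R w))" using p psd_def by blast
    also have "Bf \<sigma> (v + t *\<^sub>R w) (v + t *\<^sub>R w) = Bf \<sigma> v v + of_real t * Bf \<sigma> v w + of_real t * Bf \<sigma> w v
       + of_real t * of_real t * Bf \<sigma> w w"
      by (simp add: Bf_add_left Bf_add_right Bf_scale_left Bf_scale_right algebra_simps)
    also have "Re \<dots> = 2*t*Re (Bf \<sigma> w v) + t^2 * Re (Bf \<sigma> w w)"
      using z Bf_herm[OF h, of v w] by (simp add: power2_eq_square)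
    finally show ?thesis .
  qed
  then have "Re (Bf \<sigma> w v) = 0" using quad_zero by blast
  moreover have "Re (Bf \<sigma> w v) = (\<Sum>i\<in>UNIV. (cmod (w$i))^2)"
    by (simp add: Bf_def w_def[symmetric] cmod_power2 power2_eq_square[symmetric])
  ultimately have "\<forall>i\<in>UNIV. (cmod (w$i))^2 = 0"
    by (subst sum_nonneg_eq_0_iff[symmetric]) auto
  then show ?thesis by (simp add: w_def[symmetric] vec_eq_iff)
qed

definition colv :: "'n \<Rightarrow> 'a^'n^'m \<Rightarrow> 'a^'m" where "colv i X = (\<chi> k. X$k$i)"
definition rowc :: "'m \<Rightarrow> complex^'n^'m \<Rightarrow> complex^'n" where "rowc i X = (\<chi> l. cnj (X$i$l))"

lemma trace_quad_col: "trace (adjoint_mat X ** \<sigma> ** X) = (\<Sum>i\<in>UNIV. Bf \<sigma> (colv i X) (colv i X))"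
  unfolding trace_def Bf_expand colv_def
  apply (simp add: matrix_matrix_mult_def adjoint_mat_def sum_distrib_right)
  apply (rule sum.cong, simp)
  apply (subst sum.swap) apply simp
  done

lemma trace_quad_row: "trace (X ** \<sigma> ** adjoint_mat X) = (\<Sum>i\<in>UNIV. Bf \<sigma> (rowc i X) (rowc i X))"
  unfolding trace_def Bf_expand rowc_def
  apply (simp add: matrix_matrix_mult_def adjoint_mat_def sum_distrib_right)
  apply (rule sum.cong, simp)
  apply (subst sum.swap) apply (simp add: mult_ac)
  done

lemma kernel_lemma:
  assumes h: "hermitian \<sigma>" and p: "psd \<sigma>" and X: "X ** \<sigma> + \<sigma> ** X = 0"
  shows "\<sigma> ** X = 0" "X ** \<sigma> = 0"
proof -
  have sX: "\<sigma> ** X = - (X ** \<sigma>)" using X by (simp add: eq_neg_iff_add_eq_0 add.commute)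
  have T1: "trace (adjoint_mat X ** \<sigma> ** X) = - trace (\<sigma> ** (adjoint_mat X ** X))"
  proof -
    have "adjoint_mat X ** \<sigma> ** X = - (adjoint_mat X ** X ** \<sigma>)"
      by (simp add: matrix_mul_assoc[symmetric] sX mm_uminus_right)
    moreover have "trace (adjoint_mat X ** X ** \<sigma>) = trace (\<sigma> ** (adjoint_mat X ** X))"
      by (rule trace_mul_sym)
    moreover have "trace (- M) = - trace M" for M :: "'a cmat" by (simp add: trace_def sum_negf)
    ultimately show ?thesis by simp
  qed
  have T2: "trace (X ** \<sigma> ** adjoint_mat X) = trace (\<sigma> ** (adjoint_mat X ** X))"
    using trace_mul_sym[of X "\<sigma> ** adjoint_mat X"] by (simp add: matrix_mul_assoc)
  have r1: "0 \<le> Re (trace (adjoint_mat X ** \<sigma> ** X))"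
    unfolding trace_quad_col Re_sum using p psd_def by (auto intro: sum_nonneg)
  have r2: "0 \<le> Re (trace (X ** \<sigma> ** adjoint_mat X))"
    unfolding trace_quad_row Re_sum using p psd_def by (auto intro: sum_nonneg)
  have "Re (trace (adjoint_mat X ** \<sigma> ** X)) = 0" using r1 r2 T1 T2 by simp
  then have "(\<Sum>i\<in>UNIV. Re (Bf \<sigma> (colv i X) (colv i X))) = 0"
    by (simp add: trace_quad_col Re_sum)
  then have "\<forall>i\<in>UNIV. Re (Bf \<sigma> (colv i X) (colv i X)) = 0"
    using p psd_def by (subst sum_nonneg_eq_0_iff[symmetric]) auto
  then have "\<sigma> *v colv i X = 0" for i using psd_null[OF h p] by blast
  then show s0: "\<sigma> ** X = 0"
    by (simp add: vec_eq_iff matrix_matrix_mult_def matrix_vector_mult_def colv_def)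
  then show "X ** \<sigma> = 0" using sX by simp
qed

lemma selfadj_range:
  fixes f :: "'a::euclidean_space \<Rightarrow> 'a"
  assumes lin: "linear f" and sa: "\<And>x y. inner (f x) y = inner x (f y)"
    and orth: "\<And>x. f x = 0 \<Longrightarrow> inner x y = 0"
  shows "\<exists>x. f x = y"
proof -
  obtain a r where a: "a \<in> span (range f)" and r: "\<And>w. w \<in> span (range f) \<Longrightarrow> orthogonal r w"
    and y: "y = a + r"
    using orthogonal_subspace_decomp_exists by metis
  have sp: "span (range f) = range f"
    using linear_subspace_image[OF lin subspace_UNIV] by simp
  have "inner (f r) (f r) = 0"
  proof -
    have "inner (f r) (f r) = inner r (f (f r))" by (rule sa)
    also have "\<dots> = 0" using r[of "f (f r)"] sp by (auto simp: orthogonal_def)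
    finally show ?thesis .
  qed
  then have "f r = 0" by simp
  then have "inner r y = 0" by (rule orth)
  moreover have "inner r a = 0" using r[OF a] by (simp add: orthogonal_def)
  ultimately have "inner r r = 0" by (simp add: y inner_add_right)
  then have "r = 0" by simp
  then show ?thesis using a sp y by auto
qed

definition Phi :: "'d::finite cmat \<Rightarrow> 'd cmat \<Rightarrow> 'd cmat" where
  "Phi \<sigma> L = L ** \<sigma> + \<sigma> ** L"

lemma linear_Phi: "linear (Phi \<sigma>)"
  by (rule linearI) (simp_all add: Phi_def matrix_add_ldistrib matrix_add_rdistrib mm_scaleR_left mm_scaleR_right scaleR_right_distrib)

lemma herm_adj: "hermitian \<sigma> \<Longrightarrow> adjoint_mat \<sigma> = \<sigma>"
  by (simp add: hermitian_def)

lemma Phi_selfadj: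
  assumes h: "hermitian \<sigma>"
  shows "inner (Phi \<sigma> A) B = inner A (Phi \<sigma> B)"
proof -
  have "inner (Phi \<sigma> A) B = Re (trace (\<sigma> ** (adjoint_mat A ** B)) + trace (adjoint_mat A ** \<sigma> ** B))"
    by (simp add: inner_cmat Phi_def adj_mult herm_adj[OF h] matrix_add_rdistrib trace_add matrix_mul_assoc)
  also have "trace (\<sigma> ** (adjoint_mat A ** B)) = trace (adjoint_mat A ** B ** \<sigma>)"
    by (rule trace_mul_sym)
  also have "Re (trace (adjoint_mat A ** B ** \<sigma>) + trace (adjoint_mat A ** \<sigma> ** B)) = inner A (Phi \<sigma> B)"
    by (simp add: inner_cmat Phi_def matrix_add_ldistrib trace_add matrix_mul_assoc)
  finally show ?thesis .
qed

lemma Phi_adj: "hermitian \<sigma> \<Longrightarrow> Phi \<sigma> (adjoint_mat L) = adjoint_mat (Phi \<sigma> L)"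
  by (simp add: Phi_def adj_mult herm_adj add.commute)

lemma sld_exists:
  assumes h: "hermitian \<sigma>" and p: "psd \<sigma>" and hW: "hermitian W"
  shows "\<exists>L. hermitian L \<and> (1/2) *\<^sub>R (L ** \<sigma> + \<sigma> ** L) = cscale \<i> (W ** \<sigma> - \<sigma> ** W)"
proof -
  define D where "D = cscale (2*\<i>) (W ** \<sigma> - \<sigma> ** W)"
  have "\<exists>x. Phi \<sigma> x = D"
  proof (rule selfadj_range[OF linear_Phi Phi_selfadj[OF h]])
    fix X assume "Phi \<sigma> X = 0"
    then have X: "X ** \<sigma> + \<sigma> ** X = 0" by (simp add: Phi_def)
    have a1: "adjoint_mat X ** \<sigma> = 0"
    proof -
      have "adjoint_mat (\<sigma> ** X) = adjoint_mat X ** \<sigma>" by (simp add: adj_mult herm_adj[OF h])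
      then show ?thesis using kernel_lemma(1)[OF h p X] by simp
    qed
    have a2: "\<sigma> ** adjoint_mat X = 0"
    proof -
      have "adjoint_mat (X ** \<sigma>) = \<sigma> ** adjoint_mat X" by (simp add: adj_mult herm_adj[OF h])
      then show ?thesis using kernel_lemma(2)[OF h p X] by simp
    qed
    have t1: "trace (adjoint_mat X ** (W ** \<sigma>)) = 0"
      using trace_mul_sym[of "adjoint_mat X ** W" \<sigma>] a2 by (simp add: matrix_mul_assoc)
    have t2: "trace (adjoint_mat X ** (\<sigma> ** W)) = 0"
      using a1 by (simp add: matrix_mul_assoc)
    show "inner X D = 0"
      by (simp add: inner_cmat D_def mm_diff_right trace_cscale trace_diff t1 t2)
  qed
  then obtain L0 where L0: "Phi \<sigma> L0 = D" by blast
  have hD: "adjoint_mat D = D"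
    by (simp add: D_def adj_mult herm_adj[OF h] herm_adj[OF hW]) (simp add: cscale_def vec_eq_iff algebra_simps)
  define L where "L = (1/2) *\<^sub>R (L0 + adjoint_mat L0)"
  have "hermitian L" by (simp add: L_def hermitian_def add.commute)
  moreover have "Phi \<sigma> L = D"
    using linear_Phi[of \<sigma>] L0 Phi_adj[OF h, of L0] hD
    by (simp add: L_def linear_scale linear_add scaleR_2[symmetric] del: scaleR_2)
  moreover have "(1/2) *\<^sub>R D = cscale \<i> (W ** \<sigma> - \<sigma> ** W)"
    by (simp add: D_def scaleR_cscale)
  ultimately show ?thesis by (auto simp: Phi_def)
qed

definition G :: "'d::finite cmat \<Rightarrow> ('n::finite \<Rightarrow> 'd cmat) \<Rightarrow> real^'n^'n" where
  "G \<sigma> L = (\<chi> j k. Re (trace (L j ** L k ** \<sigma>)))"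

lemma SLDrel_exists:
  assumes h: "hermitian \<sigma>" and p: "psd \<sigma>" and hW: "\<forall>j. hermitian (W j)"
  shows "\<exists>L. SLDrel \<sigma> W L"
proof -
  have "\<forall>j. \<exists>Lj. hermitian Lj \<and> (1/2) *\<^sub>R (Lj ** \<sigma> + \<sigma> ** Lj) = cscale \<i> (W j ** \<sigma> - \<sigma> ** W j)"
    using sld_exists[OF h p] hW by blast
  then obtain L where "\<forall>j. hermitian (L j) \<and> (1/2) *\<^sub>R (L j ** \<sigma> + \<sigma> ** L j) = cscale \<i> (W j ** \<sigma> - \<sigma> ** W j)"
    by metis
  then show ?thesis unfolding SLDrel_def by blast
qed

lemma G_welldef:
  assumes h: "hermitian \<sigma>" and p: "psd \<sigma>" and L: "SLDrel \<sigma> W L" and L': "SLDrel \<sigma> W L'"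
  shows "G \<sigma> L = G \<sigma> L'"
proof -
  define X where "X j = L j - L' j" for j
  have PX: "X j ** \<sigma> + \<sigma> ** X j = 0" for j
  proof -
    have "(1/2::real) *\<^sub>R Phi \<sigma> (L j) = (1/2::real) *\<^sub>R Phi \<sigma> (L' j)"
      using L L' unfolding SLDrel_def Phi_def by metis
    then have "Phi \<sigma> (L j) = Phi \<sigma> (L' j)" by simp
    then have "Phi \<sigma> (X j) = 0" using linear_diff[OF linear_Phi, of \<sigma> "L j" "L' j"] by (simp add: X_def)
    then show ?thesis by (simp add: Phi_def)
  qed
  have sX: "\<sigma> ** X j = 0" and Xs: "X j ** \<sigma> = 0" for j
    using kernel_lemma[OF h p PX] by auto
  have Lk: "L k ** \<sigma> = L' k ** \<sigma>" for k
    using Xs[of k] by (simp add: X_def mm_diff_left)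
  have "trace (L j ** L k ** \<sigma>) = trace (L' j ** L' k ** \<sigma>)" for j k
  proof -
    have "L j ** L k ** \<sigma> = L' j ** (L' k ** \<sigma>) + X j ** (L' k ** \<sigma>)"
      by (simp add: matrix_mul_assoc[symmetric] Lk X_def mm_diff_left)
    moreover have "trace (X j ** (L' k ** \<sigma>)) = 0"
      using trace_mul_sym[of "X j" "L' k ** \<sigma>"] sX[of j] by (simp add: matrix_mul_assoc[symmetric])
    ultimately show ?thesis by (simp add: trace_add matrix_mul_assoc)
  qed
  then show ?thesis by (simp add: G_def)
qed

lemma SLDrel_cov:
  assumes u1: "U ** adjoint_mat U = mat 1" and u2: "adjoint_mat U ** U = mat 1"
    and cW: "\<forall>j. U ** W j = W j ** U" and L: "SLDrel \<sigma> W L"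
  shows "SLDrel (U ** \<sigma> ** adjoint_mat U) W (\<lambda>j. U ** L j ** adjoint_mat U)"
proof -
  have r1: "X ** adjoint_mat U ** U = X" for X
    by (simp add: matrix_mul_assoc[symmetric] u2)
  have r2: "X ** U ** adjoint_mat U = X" for X
    by (simp add: matrix_mul_assoc[symmetric] u1)
  have cW': "W j ** adjoint_mat U = adjoint_mat U ** W j" for j
  proof -
    have "adjoint_mat U ** (U ** W j) ** adjoint_mat U = adjoint_mat U ** (W j ** U) ** adjoint_mat U"
      using cW by simp
    then show ?thesis by (simp add: matrix_mul_assoc u2 r2)
  qed
  show ?thesis unfolding SLDrel_def
  proof (intro allI conjI)
    fix j
    show "hermitian (U ** L j ** adjoint_mat U)"
      using L by (simp add: SLDrel_def hermitian_def adj_mult matrix_mul_assoc)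
    have "(1/2) *\<^sub>R (U ** L j ** adjoint_mat U ** (U ** \<sigma> ** adjoint_mat U)
        + U ** \<sigma> ** adjoint_mat U ** (U ** L j ** adjoint_mat U))
       = U ** ((1/2) *\<^sub>R (L j ** \<sigma> + \<sigma> ** L j)) ** adjoint_mat U"
      by (simp add: matrix_mul_assoc r1 mm_scaleR_left mm_scaleR_right matrix_add_ldistrib matrix_add_rdistrib)
    also have "\<dots> = U ** cscale \<i> (W j ** \<sigma> - \<sigma> ** W j) ** adjoint_mat U"
      using L by (simp add: SLDrel_def)
    also have "\<dots> = cscale \<i> (U ** W j ** \<sigma> ** adjoint_mat U - U ** \<sigma> ** (W j ** adjoint_mat U))"
      by (simp add: mm_diff_left mm_diff_right matrix_mul_assoc)
    also have "\<dots> = cscale \<i> (W j ** (U ** \<sigma> ** adjoint_mat U) - U ** \<sigma> ** adjoint_mat U ** W j)"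
      by (simp add: cW cW' matrix_mul_assoc)
    finally show "(1/2) *\<^sub>R (U ** L j ** adjoint_mat U ** (U ** \<sigma> ** adjoint_mat U)
        + U ** \<sigma> ** adjoint_mat U ** (U ** L j ** adjoint_mat U))
       = cscale \<i> (W j ** (U ** \<sigma> ** adjoint_mat U) - U ** \<sigma> ** adjoint_mat U ** W j)" .
  qed
qed

lemma G_cov:
  assumes u2: "adjoint_mat U ** U = mat 1"
  shows "G (U ** \<sigma> ** adjoint_mat U) (\<lambda>j. U ** L j ** adjoint_mat U) = G \<sigma> L"
proof -
  have r1: "X ** adjoint_mat U ** U = X" for X
    by (simp add: matrix_mul_assoc[symmetric] u2)
  have "trace (U ** L j ** adjoint_mat U ** (U ** L k ** adjoint_mat U) ** (U ** \<sigma> ** adjoint_mat U))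
        = trace (L j ** L k ** \<sigma>)" for j k
  proof -
    have "U ** L j ** adjoint_mat U ** (U ** L k ** adjoint_mat U) ** (U ** \<sigma> ** adjoint_mat U)
       = U ** (L j ** L k ** \<sigma> ** adjoint_mat U)"
      by (simp add: matrix_mul_assoc r1)
    then show ?thesis using trace_mul_sym[of U "L j ** L k ** \<sigma> ** adjoint_mat U"]
      by (simp add: r1)
  qed
  then show ?thesis by (simp add: G_def)
qed

lemma SLDrel_lin:
  assumes L: "SLDrel \<sigma> W L"
  shows "SLDrel \<sigma> (\<lambda>j. \<Sum>k\<in>UNIV. S$j$k *\<^sub>R W k) (\<lambda>j. \<Sum>k\<in>UNIV. S$j$k *\<^sub>R L k)"
  unfolding SLDrel_def
proof (intro allI conjI)
  fix j
  show "hermitian (\<Sum>k\<in>UNIV. S$j$k *\<^sub>R L k)"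
    using L by (simp add: SLDrel_def hermitian_def adj_sum)
  have "(1/2) *\<^sub>R ((\<Sum>k\<in>UNIV. S$j$k *\<^sub>R L k) ** \<sigma> + \<sigma> ** (\<Sum>k\<in>UNIV. S$j$k *\<^sub>R L k))
      = (\<Sum>k\<in>UNIV. S$j$k *\<^sub>R ((1/2) *\<^sub>R (L k ** \<sigma> + \<sigma> ** L k)))"
    by (simp add: mm_sum_left mm_sum_right mm_scaleR_left mm_scaleR_right scaleR_sum_right
        sum.distrib[symmetric] scaleR_right_distrib)
  also have "\<dots> = (\<Sum>k\<in>UNIV. S$j$k *\<^sub>R cscale \<i> (W k ** \<sigma> - \<sigma> ** W k))"
    using L by (simp add: SLDrel_def)
  also have "\<dots> = cscale \<i> ((\<Sum>k\<in>UNIV. S$j$k *\<^sub>R W k) ** \<sigma> - \<sigma> ** (\<Sum>k\<in>UNIV. S$j$k *\<^sub>R W k))"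
    by (simp add: mm_sum_left mm_sum_right mm_scaleR_left mm_scaleR_right cscale_sum cscale_scaleR
        cscale_diff sum_subtractf scaleR_diff_right)
  finally show "(1/2) *\<^sub>R ((\<Sum>k\<in>UNIV. S$j$k *\<^sub>R L k) ** \<sigma> + \<sigma> ** (\<Sum>k\<in>UNIV. S$j$k *\<^sub>R L k))
      = cscale \<i> ((\<Sum>k\<in>UNIV. S$j$k *\<^sub>R W k) ** \<sigma> - \<sigma> ** (\<Sum>k\<in>UNIV. S$j$k *\<^sub>R W k))" .
qed

lemma G_lin: "G \<sigma> (\<lambda>j. \<Sum>k\<in>UNIV. S$j$k *\<^sub>R L k) = S ** G \<sigma> L ** transpose S"
proof -
  have "Re (trace ((\<Sum>k\<in>UNIV. S$j$k *\<^sub>R L k) ** (\<Sum>m\<in>UNIV. S$l$m *\<^sub>R L m) ** \<sigma>))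
      = (\<Sum>m\<in>UNIV. (\<Sum>k\<in>UNIV. S$j$k * Re (trace (L k ** L m ** \<sigma>))) * S$l$m)" for j l
  proof -
    have "(\<Sum>k\<in>UNIV. S$j$k *\<^sub>R L k) ** (\<Sum>m\<in>UNIV. S$l$m *\<^sub>R L m) ** \<sigma>
        = (\<Sum>m\<in>UNIV. \<Sum>k\<in>UNIV. (S$l$m * S$j$k) *\<^sub>R (L k ** L m ** \<sigma>))"
      by (simp add: mm_sum_left mm_sum_right mm_scaleR_left mm_scaleR_right scaleR_sum_right)
    then have "Re (trace ((\<Sum>k\<in>UNIV. S$j$k *\<^sub>R L k) ** (\<Sum>m\<in>UNIV. S$l$m *\<^sub>R L m) ** \<sigma>))
      = (\<Sum>m\<in>UNIV. \<Sum>k\<in>UNIV. (S$l$m * S$j$k) * Re (trace (L k ** L m ** \<sigma>)))"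
      by (simp add: trace_sum trace_scaleR)
    then show ?thesis by (simp add: sum_distrib_right sum_distrib_left mult_ac)
  qed
  then show ?thesis
    by (simp add: G_def vec_eq_iff matrix_matrix_mult_def transpose_def)
qed

lemma adj_vec: "(\<Sum>i\<in>UNIV. cnj (x$i) * (A *v y)$i) = (\<Sum>k\<in>UNIV. cnj ((adjoint_mat A *v x)$k) * y$k)"
proof -
  have "(\<Sum>i\<in>UNIV. cnj (x$i) * (A *v y)$i) = (\<Sum>i\<in>UNIV. \<Sum>k\<in>UNIV. cnj (x$i) * A$i$k * y$k)"
    by (simp add: matrix_vector_mult_def sum_distrib_left mult.assoc)
  also have "\<dots> = (\<Sum>k\<in>UNIV. \<Sum>i\<in>UNIV. cnj (x$i) * A$i$k * y$k)" by (rule sum.swap)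
  also have "\<dots> = (\<Sum>k\<in>UNIV. cnj ((adjoint_mat A *v x)$k) * y$k)"
    by (simp add: matrix_vector_mult_def adjoint_mat_def sum_distrib_right sum_distrib_left mult_ac)
  finally show ?thesis .
qed

lemma Bf_conj: "Bf (adjoint_mat B ** \<sigma> ** B) x y = Bf \<sigma> (B *v x) (B *v y)"
  unfolding Bf_def matrix_vector_mul_assoc[symmetric] adj_vec by simp

lemma psd_conj: "psd \<sigma> \<Longrightarrow> psd (adjoint_mat B ** \<sigma> ** B)"
  by (simp add: psd_def Bf_conj)

lemma herm_conj: "hermitian \<sigma> \<Longrightarrow> hermitian (adjoint_mat B ** \<sigma> ** B)"
  by (simp add: hermitian_def adj_mult matrix_mul_assoc)

lemma Hs_herm: "\<forall>j. hermitian (Z j) \<Longrightarrow> hermitian (Hs Z \<theta>)"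
  by (simp add: Hs_def hermitian_def adj_sum)

lemma unitary_U:
  assumes h: "hermitian H"
  shows "adjoint_mat (mexp (cscale \<i> H)) = mexp (cscale (-\<i>) H)"
    "mexp (cscale \<i> H) ** adjoint_mat (mexp (cscale \<i> H)) = mat 1"
    "adjoint_mat (mexp (cscale \<i> H)) ** mexp (cscale \<i> H) = mat 1"
proof -
  show a: "adjoint_mat (mexp (cscale \<i> H)) = mexp (cscale (-\<i>) H)"
    using h by (simp add: mexp_adj hermitian_def)
  have c: "cscale \<i> H ** cscale (-\<i>) H = cscale (-\<i>) H ** cscale \<i> H" by simp
  have s: "cscale \<i> H + cscale (-\<i>) H = 0" by (simp add: cscale_def vec_eq_iff)
  show "mexp (cscale \<i> H) ** adjoint_mat (mexp (cscale \<i> H)) = mat 1"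
    using mexp_add[OF c] s by (simp add: a mexp_zero)
  show "adjoint_mat (mexp (cscale \<i> H)) ** mexp (cscale \<i> H) = mat 1"
    using mexp_add[OF c[symmetric]] s by (simp add: a mexp_zero add.commute)
qed

lemma density_herm_psd:
  "density_operator \<rho> \<Longrightarrow> hermitian \<rho> \<and> psd \<rho>"
  by (simp add: density_operator_def psd_def Bf_def)

lemma qfi_eq:
  assumes d: "density_operator \<rho>" and hZ: "\<forall>j. hermitian (Z j)"
    and comm: "\<forall>j k. Z j ** Z k = Z k ** Z j" and L0: "SLDrel \<rho> Z L0"
  shows "qfi_matrix (unitary_family Z \<rho>) \<theta> = G \<rho> L0"
proof -
  define H where "H = Hs Z \<theta>"
  define U where "U = mexp (cscale \<i> H)"
  have hH: "hermitian H" using Hs_herm[OF hZ] by (simp add: H_def)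
  note u = unitary_U[OF hH, folded U_def]
  have fam: "unitary_family Z \<rho> \<theta> = U ** \<rho> ** adjoint_mat U"
    by (simp add: fam_def U_def H_def u(1)[unfolded U_def H_def])
  have hr: "hermitian \<rho>" "psd \<rho>" using density_herm_psd[OF d] by auto
  have cU: "\<forall>j. U ** Z j = Z j ** U"
  proof
    fix j
    have "cscale \<i> H ** Z j = Z j ** cscale \<i> H" by (simp add: H_def Hs_commute[OF comm])
    then show "U ** Z j = Z j ** U" unfolding U_def using mexp_commute by metis
  qed
  have hs: "hermitian (U ** \<rho> ** adjoint_mat U)" "psd (U ** \<rho> ** adjoint_mat U)"
    using herm_conj[OF hr(1), of "adjoint_mat U"] psd_conj[OF hr(2), of "adjoint_mat U"] by auto
  have S1: "SLDrel (U ** \<rho> ** adjoint_mat U) Z (\<lambda>j. U ** L0 j ** adjoint_mat U)"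
    by (rule SLDrel_cov[OF u(2) u(3) cU L0])
  have ex: "\<exists>L. is_SLD (unitary_family Z \<rho>) \<theta> L"
    using S1 is_SLD_fam[OF comm] fam by metis
  define Ls where "Ls = (SOME L. is_SLD (unitary_family Z \<rho>) \<theta> L)"
  have "is_SLD (unitary_family Z \<rho>) \<theta> Ls" unfolding Ls_def using ex by (rule someI_ex)
  then have S2: "SLDrel (U ** \<rho> ** adjoint_mat U) Z Ls" using is_SLD_fam[OF comm] fam by metis
  have "qfi_matrix (unitary_family Z \<rho>) \<theta> = G (U ** \<rho> ** adjoint_mat U) Ls"
    by (simp add: qfi_matrix_def Ls_def[symmetric] G_def fam)
  also have "\<dots> = G (U ** \<rho> ** adjoint_mat U) (\<lambda>j. U ** L0 j ** adjoint_mat U)"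
    by (rule G_welldef[OF hs S2 S1])
  also have "\<dots> = G \<rho> L0" by (rule G_cov[OF u(3)])
  finally show ?thesis .
qed

lemma comb_herm: "\<forall>j. hermitian (Z j) \<Longrightarrow> \<forall>j. hermitian (\<Sum>k\<in>UNIV. S$j$k *\<^sub>R Z k)"
  by (simp add: hermitian_def adj_sum)

lemma comb_mult: "(\<Sum>k\<in>UNIV. a k *\<^sub>R (A k::'d::finite cmat)) ** (\<Sum>m\<in>UNIV. b m *\<^sub>R B m)
   = (\<Sum>m\<in>UNIV. \<Sum>k\<in>UNIV. (b m * a k) *\<^sub>R (A k ** B m))"
  apply (simp add: mm_sum_left mm_sum_right)
  apply (simp add: mm_scaleR_left mm_scaleR_right scaleR_sum_right)
  done

lemma comb_comm:
  fixes Z :: "'n::finite \<Rightarrow> 'd::finite cmat"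
  assumes comm: "\<forall>j k. Z j ** Z k = Z k ** Z j"
  shows "\<forall>j l. (\<Sum>k\<in>UNIV. S$j$k *\<^sub>R Z k) ** (\<Sum>k\<in>UNIV. S$l$k *\<^sub>R Z k)
             = (\<Sum>k\<in>UNIV. S$l$k *\<^sub>R Z k) ** (\<Sum>k\<in>UNIV. S$j$k *\<^sub>R Z k)"
proof (intro allI)
  fix j l
  have "(\<Sum>k\<in>UNIV. S$l$k *\<^sub>R Z k) ** (\<Sum>k\<in>UNIV. S$j$k *\<^sub>R Z k)
      = (\<Sum>m\<in>UNIV. \<Sum>k\<in>UNIV. (S$j$m * S$l$k) *\<^sub>R (Z k ** Z m))"
    by (rule comb_mult)
  also have "\<dots> = (\<Sum>k\<in>UNIV. \<Sum>m\<in>UNIV. (S$j$m * S$l$k) *\<^sub>R (Z k ** Z m))"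
    by (rule sum.swap)
  also have "\<dots> = (\<Sum>k\<in>UNIV. \<Sum>m\<in>UNIV. (S$l$k * S$j$m) *\<^sub>R (Z m ** Z k))"
    by (intro sum.cong refl) (metis comm mult.commute)
  also have "\<dots> = (\<Sum>k\<in>UNIV. S$j$k *\<^sub>R Z k) ** (\<Sum>k\<in>UNIV. S$l$k *\<^sub>R Z k)"
    by (rule comb_mult[symmetric])
  finally show "(\<Sum>k\<in>UNIV. S$j$k *\<^sub>R Z k) ** (\<Sum>k\<in>UNIV. S$l$k *\<^sub>R Z k)
             = (\<Sum>k\<in>UNIV. S$l$k *\<^sub>R Z k) ** (\<Sum>k\<in>UNIV. S$j$k *\<^sub>R Z k)" by simp
qed

lemma G_sym:
  assumes hr: "hermitian \<rho>" and L: "\<forall>j. hermitian (L j)"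
  shows "transpose (G \<rho> L) = G \<rho> L"
proof -
  have "Re (trace (L k ** L j ** \<rho>)) = Re (trace (L j ** L k ** \<rho>))" for j k
  proof -
    have "trace (L k ** L j ** \<rho>) = cnj (trace (adjoint_mat (L k ** L j ** \<rho>)))"
      by (simp add: trace_adj)
    also have "adjoint_mat (L k ** L j ** \<rho>) = \<rho> ** (L j ** L k)"
      using hr L by (simp add: adj_mult hermitian_def matrix_mul_assoc)
    also have "trace (\<rho> ** (L j ** L k)) = trace (L j ** L k ** \<rho>)" by (rule trace_mul_sym)
    finally show ?thesis by simp
  qed
  then show ?thesis by (simp add: G_def transpose_def vec_eq_iff)
qed

theorem qfi_transform:
  assumes d: "density_operator \<rho>" and hZ: "\<forall>j. hermitian (Z j)"
    and comm: "\<forall>j k. Z j ** Z k = Z k ** Z j"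
  shows "\<exists>M. transpose M = M \<and> qfi_matrix (unitary_family Z \<rho>) \<theta> = M \<and>
     qfi_matrix (unitary_family (\<lambda>j. \<Sum>k\<in>UNIV. S$j$k *\<^sub>R Z k) \<rho>) \<theta> = S ** M ** transpose S"
proof -
  have hr: "hermitian \<rho>" "psd \<rho>" using density_herm_psd[OF d] by auto
  obtain L0 where L0: "SLDrel \<rho> Z L0" using SLDrel_exists[OF hr hZ] by blast
  have hL: "\<forall>j. hermitian (L0 j)" using L0 by (simp add: SLDrel_def)
  have L1: "SLDrel \<rho> (\<lambda>j. \<Sum>k\<in>UNIV. S$j$k *\<^sub>R Z k) (\<lambda>j. \<Sum>k\<in>UNIV. S$j$k *\<^sub>R L0 k)"
    by (rule SLDrel_lin[OF L0])
  have e1: "qfi_matrix (unitary_family Z \<rho>) \<theta> = G \<rho> L0"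
    by (rule qfi_eq[OF d hZ comm L0])
  have e2: "qfi_matrix (unitary_family (\<lambda>j. \<Sum>k\<in>UNIV. S$j$k *\<^sub>R Z k) \<rho>) \<theta>
      = G \<rho> (\<lambda>j. \<Sum>k\<in>UNIV. S$j$k *\<^sub>R L0 k)"
    by (rule qfi_eq[OF d comb_herm[OF hZ] comb_comm[OF comm] L1])
  show ?thesis
    by (rule exI[of _ "G \<rho> L0"]) (simp add: e1 e2 G_lin G_sym[OF hr(1) hL])
qed

lemma sym_inner:
  fixes A :: "real^'n^'n"
  assumes s: "transpose A = A"
  shows "inner (A *v x) y = inner x (A *v y)"
proof -
  have "A *v x = x v* A" using transpose_matrix_vector[of A x] s by simp
  then show ?thesis by (simp add: dot_lmul_matrix)
qed

lemma rayleigh_eig: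
  fixes A :: "real^'n^'n"
  assumes s: "transpose A = A" and V: "subspace V" and inv: "\<forall>x\<in>V. A *v x \<in> V"
    and u: "u \<in> V" "norm u = 1"
    and mx: "\<forall>y\<in>V. norm y = 1 \<longrightarrow> inner y (A *v y) \<le> inner u (A *v u)"
  shows "A *v u = inner u (A *v u) *\<^sub>R u"
proof -
  define m where "m = inner u (A *v u)"
  have uu: "inner u u = 1" using u(2) by (simp add: dot_square_norm)
  have claim: "inner w (A *v u) = 0" if w: "w \<in> V" "inner w u = 0" for w
  proof -
    have "0 \<le> 2*t*(- inner w (A *v u)) + t^2 * (m * inner w w - inner w (A *v w))" for t :: real
    proof -
      define x where "x = u + t *\<^sub>R w"
      have xV: "x \<in> V" using V u w by (simp add: x_def subspace_add subspace_scale)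
      have nx: "inner x x = 1 + t^2 * inner w w"
        using w uu by (simp add: x_def inner_add_left inner_add_right inner_commute power2_eq_square)
      then have xpos: "inner x x > 0"
        by (metis add_pos_nonneg inner_ge_zero mult_nonneg_nonneg zero_le_power2 zero_less_one)
      have "x \<noteq> 0" using xpos by auto
      then have nx0: "norm x > 0" by simp
      define y where "y = (1 / norm x) *\<^sub>R x"
      have yV: "y \<in> V" using V xV by (simp add: y_def subspace_scale)
      have ny: "norm y = 1" using nx0 by (simp add: y_def)
      have "inner y (A *v y) = inner x (A *v x) / (norm x)^2"
        by (simp add: y_def matrix_vector_mult_scaleR power2_eq_square)
      then have "inner x (A *v x) / (norm x)^2 \<le> m" using mx yV ny unfolding m_def by metis
      then have le: "inner x (A *v x) \<le> m * inner x x"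
        using nx0 by (simp add: divide_le_eq dot_square_norm mult.commute)
      have "inner x (A *v x) = m + 2*t*inner w (A *v u) + t^2 * inner w (A *v w)"
        using sym_inner[OF s, of u w]
        by (simp add: x_def m_def matrix_vector_right_distrib matrix_vector_mult_scaleR
            inner_add_left inner_add_right inner_commute power2_eq_square algebra_simps)
      with le nx show ?thesis by (simp add: algebra_simps)
    qed
    then have "- inner w (A *v u) = 0" using quad_zero by blast
    then show ?thesis by simp
  qed
  define r where "r = A *v u - m *\<^sub>R u"
  have rV: "r \<in> V" using V inv u by (simp add: r_def subspace_diff subspace_scale)
  have ru: "inner r u = 0"
    using uu by (simp add: r_def m_def inner_diff_left inner_diff_right inner_commute)
  have "inner r r = inner r (A *v u) - m * inner r u"
    by (simp add: r_def inner_diff_right)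
  also have "\<dots> = 0" using claim[OF rV ru] ru by simp
  finally have "r = 0" by simp
  then show ?thesis by (simp add: r_def m_def)
qed


lemma spectral_sub:
  fixes A :: "real^'n^'n"
  assumes s: "transpose A = A"
  shows "subspace V \<Longrightarrow> (\<forall>x\<in>V. A *v x \<in> V) \<Longrightarrow> \<exists>B. B \<subseteq> V \<and> finite B \<and> pairwise orthogonal B \<and>
     (\<forall>b\<in>B. norm b = 1 \<and> (\<exists>c. A *v b = c *\<^sub>R b)) \<and> V \<subseteq> span B"
proof (induction "dim V" arbitrary: V rule: less_induct)
  case less
  note V = less.prems(1) and inv = less.prems(2)
  show ?case
  proof (cases "V \<subseteq> {0}")
    case True
    then show ?thesis by (intro exI[of _ "{}"]) auto
  next
    case False
    then obtain v where v: "v \<in> V" "v \<noteq> 0" by auto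
    define K where "K = sphere (0::real^'n) 1 \<inter> V"
    have cK: "compact K" unfolding K_def
      by (rule compact_Int_closed) (auto intro: closed_subspace V)
    have vK: "(1 / norm v) *\<^sub>R v \<in> K" using v V by (simp add: K_def subspace_scale)
    have ctn: "continuous_on K (\<lambda>y. inner y (A *v y))"
      by (intro continuous_intros linear_continuous_on) (simp add: linear_conv_bounded_linear[symmetric])
    obtain u where uK: "u \<in> K" and umax: "\<forall>y\<in>K. inner y (A *v y) \<le> inner u (A *v u)"
      using continuous_attains_sup[OF cK _ ctn] vK by blast
    have u: "u \<in> V" "norm u = 1" using uK by (auto simp: K_def)
    have mx: "\<forall>y\<in>V. norm y = 1 \<longrightarrow> inner y (A *v y) \<le> inner u (A *v u)"
      using umax by (auto simp: K_def)
    define m where "m = inner u (A *v u)"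
    have eig: "A *v u = m *\<^sub>R u" unfolding m_def by (rule rayleigh_eig[OF s V inv u mx])
    have uu: "inner u u = 1" using u(2) by (simp add: dot_square_norm)
    define V' where "V' = {x\<in>V. inner u x = 0}"
    have sV': "subspace V'"
      using V unfolding V'_def subspace_def by (auto simp: inner_add_right)
    have iV': "\<forall>x\<in>V'. A *v x \<in> V'"
    proof
      fix x assume x: "x \<in> V'"
      have "inner u (A *v x) = inner (A *v u) x" using sym_inner[OF s, of u x] by simp
      also have "\<dots> = 0" using x by (simp add: eig V'_def)
      finally show "A *v x \<in> V'" using x inv by (simp add: V'_def)
    qed
    have "u \<notin> V'" using uu by (simp add: V'_def)
    then have "V' \<subset> V" using u(1) unfolding V'_def by blast
    moreover have "span V' = V'" "span V = V" using sV' V by simp_all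
    ultimately have "dim V' < dim V"
      using dim_psubset[of V' V] by metis
    then obtain B' where B': "B' \<subseteq> V'" "finite B'" "pairwise orthogonal B'"
      "\<forall>b\<in>B'. norm b = 1 \<and> (\<exists>c. A *v b = c *\<^sub>R b)" "V' \<subseteq> span B'"
      using less.hyps[OF _ sV' iV'] by blast
    show ?thesis
    proof (intro exI[of _ "insert u B'"] conjI)
      show "insert u B' \<subseteq> V" using B'(1) u by (auto simp: V'_def)
      show "finite (insert u B')" using B'(2) by simp
      show "pairwise orthogonal (insert u B')"
        using B'(1,3) by (auto simp: pairwise_insert V'_def orthogonal_def inner_commute)
      show "\<forall>b\<in>insert u B'. norm b = 1 \<and> (\<exists>c. A *v b = c *\<^sub>R b)"
        using B'(4) u eig by auto
      show "V \<subseteq> span (insert u B')"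
      proof
        fix x assume x: "x \<in> V"
        define x' where "x' = x - inner u x *\<^sub>R u"
        have "x' \<in> V'" using x u uu V by (simp add: x'_def V'_def subspace_diff subspace_scale inner_diff_right)
        then have "x' \<in> span (insert u B')" using B'(5) span_mono[of B' "insert u B'"] by auto
        moreover have "u \<in> span (insert u B')" by (simp add: span_base)
        ultimately have "x' + inner u x *\<^sub>R u \<in> span (insert u B')"
          by (intro span_add span_scale)
        then show "x \<in> span (insert u B')" by (simp add: x'_def)
      qed
    qed
  qed
qed


theorem spectral:
  fixes A :: "real^'n^'n"
  assumes s: "transpose A = A"
  shows "\<exists>Q lam. orthogonal_matrix Q \<and> A = Q ** diag_mat lam ** transpose Q"
proof -
  obtain B where B: "finite B" "pairwise orthogonal B"
      "\<forall>b\<in>B. norm b = 1 \<and> (\<exists>c. A *v b = c *\<^sub>R b)" "UNIV \<subseteq> span B"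
    using spectral_sub[OF s, of UNIV] by auto
  have "0 \<notin> B" using B(3) by auto
  then have ind: "independent B" using pairwise_orthogonal_independent[OF B(2)] by blast
  have "card B = CARD('n)"
  proof -
    have sp: "span B = UNIV" using B(4) by (simp add: top.extremum_unique)
    have "dim (UNIV :: (real^'n) set) = CARD('n)" by simp
    then show ?thesis using dim_span_eq_card_independent[OF ind] sp by simp
  qed
  then obtain g where g: "bij_betw g (UNIV::'n set) B"
    using finite_same_card_bij[of "UNIV::'n set" B] B(1) by auto
  obtain lf where lf: "\<forall>b\<in>B. A *v b = lf b *\<^sub>R b" using B(3) by metis
  define Q :: "real^'n^'n" where "Q = (\<chi> r i. g i $ r)"
  define lam :: "real^'n" where "lam = (\<chi> i. lf (g i))"
  have gB: "g i \<in> B" for i using g by (auto simp: bij_betw_def)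
  have ginj: "g i = g j \<Longrightarrow> i = j" for i j using g by (auto simp: bij_betw_def inj_on_def)
  have inn: "inner (g i) (g j) = (if i = j then 1 else 0)" for i j
  proof (cases "i = j")
    case True then show ?thesis using B(3) gB[of i] by (simp add: dot_square_norm)
  next
    case False
    then have "g i \<noteq> g j" using ginj by blast
    then show ?thesis using B(2) gB False by (auto simp: pairwise_def orthogonal_def)
  qed
  have QQ: "transpose Q ** Q = mat 1"
    using inn by (simp add: Q_def transpose_def matrix_matrix_mult_def mat_def vec_eq_iff inner_vec_def)
  then have oQ: "orthogonal_matrix Q" by (simp add: orthogonal_matrix)
  have AQ: "A ** Q = Q ** diag_mat lam"
  proof -
    have "(A ** Q)$r$i = (Q ** diag_mat lam)$r$i" for r i
    proof -
      have "(A ** Q)$r$i = (A *v g i)$r"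
        by (simp add: Q_def matrix_matrix_mult_def matrix_vector_mult_def)
      also have "\<dots> = lf (g i) * g i $ r" using lf gB by simp
      also have "\<dots> = (Q ** diag_mat lam)$r$i"
        by (simp add: Q_def lam_def diag_mat_def matrix_matrix_mult_def if_distrib if_distribR
            sum.delta cong: if_cong)
      finally show ?thesis .
    qed
    then show ?thesis by (simp add: vec_eq_iff)
  qed
  have "Q ** transpose Q = mat 1" using oQ by (simp add: orthogonal_matrix_def)
  then have "A = A ** Q ** transpose Q" by (simp add: matrix_mul_assoc[symmetric])
  also have "\<dots> = Q ** diag_mat lam ** transpose Q" by (simp add: AQ)
  finally show ?thesis using oQ by blast
qed

declare transpose_matrix_vector[simp del]

lemma diag_mv: "(diag_mat d *v w)$i = d$i * w$i"
  by (simp add: diag_mat_def matrix_vector_mult_def if_distrib if_distribR sum.delta cong: if_cong)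

lemma mv_axis: "((M::real^'n^'m) *v axis i 1)$r = M$r$i"
  by (simp add: matrix_vector_mult_def axis_def if_distrib if_distribR sum.delta cong: if_cong)

lemma eig_apply:
  fixes Q :: "real^'n^'n"
  assumes oQ: "orthogonal_matrix Q" and X: "X = Q ** diag_mat lam ** transpose Q"
    and v: "X *v v = c *\<^sub>R v"
  shows "(Q ** diag_mat (\<chi> i. g (lam$i)) ** transpose Q) *v v = g c *\<^sub>R v"
proof -
  have QtQ: "transpose Q ** Q = mat 1" and QQt: "Q ** transpose Q = mat 1"
    using oQ by (auto simp: orthogonal_matrix_def)
  define w where "w = transpose Q *v v"
  have "diag_mat lam *v w = transpose Q *v (X *v v)"
    by (simp add: X w_def matrix_vector_mul_assoc matrix_mul_assoc QtQ)
  also have "\<dots> = c *\<^sub>R w" by (simp add: v w_def matrix_vector_mult_scaleR)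
  finally have e: "lam$i * w$i = c * w$i" for i
    using diag_mv[of lam w i] by (metis vector_scaleR_component real_scaleR_def)
  have "g (lam$i) * w$i = g c * w$i" for i
    using e[of i] by (cases "w$i = 0") auto
  then have d: "diag_mat (\<chi> i. g (lam$i)) *v w = g c *\<^sub>R w"
    by (simp add: vec_eq_iff diag_mv)
  have "(Q ** diag_mat (\<chi> i. g (lam$i)) ** transpose Q) *v v = Q *v (diag_mat (\<chi> i. g (lam$i)) *v w)"
    by (simp add: w_def matrix_vector_mul_assoc matrix_mul_assoc)
  also have "\<dots> = Q *v (g c *\<^sub>R w)" by (simp only: d)
  also have "\<dots> = g c *\<^sub>R (Q *v w)" by (simp add: matrix_vector_mult_scaleR)
  also have "Q *v w = v" by (simp add: w_def matrix_vector_mul_assoc QQt)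
  finally show ?thesis .
qed

lemma mf_unique:
  fixes Q Q' :: "real^'n^'n"
  assumes oQ: "orthogonal_matrix Q" and oQ': "orthogonal_matrix Q'"
    and X: "Q ** diag_mat lam ** transpose Q = Q' ** diag_mat lam' ** transpose Q'"
  shows "Q ** diag_mat (\<chi> i. g (lam$i)) ** transpose Q = Q' ** diag_mat (\<chi> i. g (lam'$i)) ** transpose Q'"
proof -
  define Xm where "Xm = Q' ** diag_mat lam' ** transpose Q'"
  define Y where "Y = Q ** diag_mat (\<chi> i. g (lam$i)) ** transpose Q"
  define Y' where "Y' = Q' ** diag_mat (\<chi> i. g (lam'$i)) ** transpose Q'"
  have QtQ': "transpose Q' ** Q' = mat 1" and QQt': "Q' ** transpose Q' = mat 1"
    using oQ' by (auto simp: orthogonal_matrix_def)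
  have XQ: "Xm ** Q' = Q' ** diag_mat lam'"
    by (simp add: Xm_def matrix_mul_assoc[symmetric] QtQ')
  have col: "Y *v (Q' *v axis i 1) = Y' *v (Q' *v axis i 1)" for i
  proof -
    define v where "v = Q' *v axis i 1"
    have Dax: "diag_mat lam' *v axis i 1 = lam'$i *\<^sub>R axis i 1"
      by (simp add: vec_eq_iff diag_mv axis_def)
    have ev: "Xm *v v = lam'$i *\<^sub>R v"
      by (simp add: v_def matrix_vector_mul_assoc XQ) 
         (simp add: matrix_vector_mul_assoc[symmetric] Dax matrix_vector_mult_scaleR)
    have "Y *v v = g (lam'$i) *\<^sub>R v"
      unfolding Y_def by (rule eig_apply[OF oQ _ ev]) (simp add: Xm_def X)
    moreover have "Y' *v v = g (lam'$i) *\<^sub>R v"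
      unfolding Y'_def by (rule eig_apply[OF oQ' _ ev]) (simp add: Xm_def)
    ultimately show ?thesis by (simp add: v_def)
  qed
  have "Y ** Q' = Y' ** Q'"
  proof -
    have "(Y ** Q')$r$i = (Y' ** Q')$r$i" for r i
      using col[of i] mv_axis[of "Y ** Q'" i r] mv_axis[of "Y' ** Q'" i r]
      by (simp add: matrix_vector_mul_assoc)
    then show ?thesis by (simp add: vec_eq_iff)
  qed
  then have "Y ** Q' ** transpose Q' = Y' ** Q' ** transpose Q'" by simp
  then show ?thesis by (simp add: Y_def Y'_def matrix_mul_assoc[symmetric] QQt')
qed

lemma mat_fun_eq:
  fixes Q :: "real^'n^'n"
  assumes oQ: "orthogonal_matrix Q"
  shows "mat_fun g (Q ** diag_mat lam ** transpose Q) = Q ** diag_mat (\<chi> i. g (lam$i)) ** transpose Q"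
proof -
  define P where "P Y = (\<exists>Q1 l1. orthogonal_matrix Q1 \<and>
       Q ** diag_mat lam ** transpose Q = Q1 ** diag_mat l1 ** transpose Q1 \<and>
       Y = Q1 ** diag_mat (\<chi> i. g (l1$i)) ** transpose Q1)" for Y
  have "P (Q ** diag_mat (\<chi> i. g (lam$i)) ** transpose Q)" unfolding P_def using oQ by blast
  then have "P (SOME Y. P Y)" by (rule someI)
  then obtain Q1 l1 where q1: "orthogonal_matrix Q1"
    "Q ** diag_mat lam ** transpose Q = Q1 ** diag_mat l1 ** transpose Q1"
    "(SOME Y. P Y) = Q1 ** diag_mat (\<chi> i. g (l1$i)) ** transpose Q1" unfolding P_def by blast
  have "mat_fun g (Q ** diag_mat lam ** transpose Q) = (SOME Y. P Y)"
    unfolding mat_fun_def P_def by simp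
  also have "\<dots> = Q ** diag_mat (\<chi> i. g (lam$i)) ** transpose Q"
    using mf_unique[OF oQ q1(1) q1(2)] q1(3) by simp
  finally show ?thesis .
qed

lemma trace_conj_orth:
  fixes S :: "real^'n^'n"
  assumes oS: "orthogonal_matrix S"
  shows "trace (S ** Y ** transpose S) = trace Y"
proof -
  have "trace (S ** Y ** transpose S) = trace (transpose S ** (S ** Y))" by (rule trace_mul_sym)
  also have "\<dots> = trace Y" using oS by (simp add: matrix_mul_assoc orthogonal_matrix_def)
  finally show ?thesis .
qed

theorem lemma1:
  fixes \<rho> :: "complex^'d^'d"
    and Z :: "'n::finite \<Rightarrow> complex^'d^'d"
    and S :: "real^'n^'n"
    and \<theta> :: "real^'n"
    and f :: "real \<Rightarrow> real"
    and I :: "real set"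
  assumes "density_operator \<rho>"
    and "\<forall>j. hermitian (Z j)"
    and "\<forall>j k. Z j ** Z k = Z k ** Z j"
    and "orthogonal_matrix S"
    and "is_interval I"
    and "real_spectrum (qfi_matrix (unitary_family Z \<rho>) \<theta>) \<subseteq> I"
    and "continuous_on I f"
    and "monotone_on I (<) (<) f \<or> monotone_on I (<) (>) f"
  shows "f_mean I f (qfi_matrix (unitary_family (\<lambda>j. \<Sum>k\<in>UNIV. S$j$k *\<^sub>R Z k) \<rho>) \<theta>)
       = f_mean I f (qfi_matrix (unitary_family Z \<rho>) \<theta>)"
proof -
  obtain M where M: "transpose M = M" "qfi_matrix (unitary_family Z \<rho>) \<theta> = M"
    "qfi_matrix (unitary_family (\<lambda>j. \<Sum>k\<in>UNIV. S$j$k *\<^sub>R Z k) \<rho>) \<theta> = S ** M ** transpose S"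
    using qfi_transform[OF assms(1,2,3)] by blast
  obtain Q lam where Q: "orthogonal_matrix Q" "M = Q ** diag_mat lam ** transpose Q"
    using spectral[OF M(1)] by blast
  have oSQ: "orthogonal_matrix (S ** Q)" by (rule orthogonal_matrix_mul[OF assms(4) Q(1)])
  have "S ** M ** transpose S = (S ** Q) ** diag_mat lam ** transpose (S ** Q)"
    by (simp add: Q(2) matrix_transpose_mul matrix_mul_assoc)
  then have "mat_fun f (S ** M ** transpose S) = (S ** Q) ** diag_mat (\<chi> i. f (lam$i)) ** transpose (S ** Q)"
    using mat_fun_eq[OF oSQ] by simp
  also have "\<dots> = S ** (Q ** diag_mat (\<chi> i. f (lam$i)) ** transpose Q) ** transpose S"
    by (simp add: matrix_transpose_mul matrix_mul_assoc)
  also have "\<dots> = S ** mat_fun f M ** transpose S"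
    using mat_fun_eq[OF Q(1)] Q(2) by simp
  finally have "trace (mat_fun f (S ** M ** transpose S)) = trace (mat_fun f M)"
    using trace_conj_orth[OF assms(4)] by simp
  then show ?thesis by (simp add: f_mean_def M(2,3))
qed

end
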